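(* Let $\Lambda=\{0,1\}^2\subset\mathbb{Z}^2$ (points $(x,y)$) and let $\mu$ be the probability measure on $\{0,1\}^\Lambda$ giving probability $1/4$ to each of the following four configurations (listing the occupied sites, all others being $0$): $\eta^{(1)}$: $\{(0,0)\}$; $\eta^{(2)}$: $\{(0,0),(0,1),(1,0)\}$; $\eta^{(3)}$: $\{(0,1),(1,1)\}$; $\eta^{(4)}$: $\{(1,0),(1,1)\}$. Then $\mu$ is LTI, but there is no probability measure on configurations of a $3\times3$ square $\Lambda'\supset\Lambda$ whose marginal on each of the four $2\times 2$ subsquares of $\Lambda'$ is the corresponding translate of $\mu$; in particular $\mu$ has no translation invariant extension to $\{0,1\}^{\mathbb{Z}^2}$.
   Context: A probability measure $\mu_\Lambda$ on $\{0,1\}^\Lambda$, $\Lambda\subset\mathbb{Z}^d$, is LTI if for all $A,A'\subset\Lambda$ with $A'$ a translate of $A$, the marginal on $\{0,1\}^{A'}$ is the translate of the marginal on $\{0,1\}^A$. A translation invariant extension is a $\mathbb{Z}^2$-translation invariant probability measure on $\{0,1\}^{\mathbb{Z}^2}$ with marginal $\mu$ on $\Lambda$. *)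

theory Defs
  imports "HOL-Probability.Probability"
begin

type_synonym site = "int \<times> int"
type_synonym config = "site \<Rightarrow> bool"

definition conf :: "site set \<Rightarrow> config" where
  "conf S = (\<lambda>x. x \<in> S)"

definition tr :: "site \<Rightarrow> site \<Rightarrow> site" where
  "tr v x = (fst x + fst v, snd x + snd v)"

definition translate_set :: "site \<Rightarrow> site set \<Rightarrow> site set" where
  "translate_set v A = tr v ` A"

definition shift :: "site \<Rightarrow> config \<Rightarrow> config" where
  "shift v \<eta> = (\<lambda>x. \<eta> (fst x - fst v, snd x - snd v))"

text \<open>Restriction of a configuration to A (sites outside A are set to 0).
  A probability measure on the finite set {0,1}^A is represented by a pmf on
  configurations vanishing outside A.\<close>
definition restr :: "site set \<Rightarrow> config \<Rightarrow> config" where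
  "restr A \<eta> = (\<lambda>x. if x \<in> A then \<eta> x else False)"

definition supported_on :: "site set \<Rightarrow> config pmf \<Rightarrow> bool" where
  "supported_on A p \<longleftrightarrow> (\<forall>\<eta>\<in>set_pmf p. \<forall>x. x \<notin> A \<longrightarrow> \<not> \<eta> x)"

definition marginal :: "site set \<Rightarrow> config pmf \<Rightarrow> config pmf" where
  "marginal A p = map_pmf (restr A) p"

definition LTI :: "site set \<Rightarrow> config pmf \<Rightarrow> bool" where
  "LTI \<Lambda> p \<longleftrightarrow> (\<forall>A A' v. A \<subseteq> \<Lambda> \<longrightarrow> A' \<subseteq> \<Lambda> \<longrightarrow> A' = translate_set v A \<longrightarrow>
        marginal A' p = map_pmf (shift v) (marginal A p))"

definition square :: "int \<Rightarrow> int \<Rightarrow> int \<Rightarrow> site set" where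
  "square a b n = {a..a + n - 1} \<times> {b..b + n - 1}"

definition Lam :: "site set" where
  "Lam = square 0 0 2"

definition mu :: "config pmf" where
  "mu = pmf_of_set {conf {(0,0)}, conf {(0,0),(0,1),(1,0)},
                    conf {(0,1),(1,1)}, conf {(1,0),(1,1)}}"

definition cfg_space :: "site set \<Rightarrow> (site \<Rightarrow> bool) measure" where
  "cfg_space A = PiM A (\<lambda>_. count_space UNIV)"

definition TI_extension :: "site set \<Rightarrow> config pmf \<Rightarrow> config measure \<Rightarrow> bool" where
  "TI_extension \<Lambda> p M \<longleftrightarrow>
     prob_space M \<and> sets M = sets (cfg_space UNIV) \<and>
     (\<forall>v. distr M M (shift v) = M) \<and>
     distr M (cfg_space \<Lambda>) (\<lambda>\<omega>. restrict \<omega> \<Lambda>) =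
       distr (measure_pmf p) (cfg_space \<Lambda>) (\<lambda>\<eta>. restrict \<eta> \<Lambda>)"

end

theory Submission
  imports Defs
begin

lemma restr_conf: "restr B (conf S) = conf (B \<inter> S)"
  by (auto simp: restr_def conf_def)

lemma shift_conf: "shift v (conf S) = conf (tr v ` S)"
proof -
  have "\<And>x. ((fst x - fst v, snd x - snd v) \<in> S) = (x \<in> tr v ` S)"
  proof
    fix x assume "(fst x - fst v, snd x - snd v) \<in> S"
    then show "x \<in> tr v ` S" by (auto simp: tr_def image_iff intro!: bexI[of _ "(fst x - fst v, snd x - snd v)"])
  next
    fix x assume "x \<in> tr v ` S" then show "(fst x - fst v, snd x - snd v) \<in> S" by (auto simp: tr_def)
  qed
  then show ?thesis by (auto simp: shift_def conf_def)
qed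

lemma conf_inj[simp]: "conf S = conf T \<longleftrightarrow> S = T"
  by (auto simp: conf_def fun_eq_iff)

lemma mset4: "mset_set {conf {(0::int,0::int)}, conf {(0,0),(0,1),(1,0)},
                    conf {(0,1),(1,1)}, conf {(1,0),(1,1)}} = {#conf {(0,0)}, conf {(0,0),(0,1),(1,0)},
                    conf {(0,1),(1,1)}, conf {(1,0),(1,1)}#}"
  by (simp add: doubleton_eq_iff insert_eq_iff)

lemma mu_map: "map_pmf f mu = pmf_of_multiset {#f (conf {(0,0)}), f (conf {(0,0),(0,1),(1,0)}),
                    f (conf {(0,1),(1,1)}), f (conf {(1,0),(1,1)})#}"
  unfolding mu_def by (subst map_pmf_of_set) (simp_all only: mset4, auto)

lemma Lam_eq: "Lam = {(0,0),(0,1),(1,0),(1,1)}"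
  by (auto simp: Lam_def square_def)

lemma K: "map_pmf (restr (Lam \<inter> tr v ` Lam)) mu = map_pmf (restr (Lam \<inter> tr v ` Lam) \<circ> shift v) mu"
proof (cases "fst v \<in> {-1,0,1} \<and> snd v \<in> {-1,0,1}")
  case True
  then obtain a b where v: "v = (a,b)" "a \<in> {-1,0,1}" "b \<in> {-1,0,1}" by (cases v) auto
  show ?thesis using v(2,3) unfolding v(1)
    by (elim insertE emptyE; simp add: Lam_eq tr_def mu_map restr_conf shift_conf add_mset_commute insert_commute)
next
  case False
  have "Lam \<inter> tr v ` Lam = {}" using False by (auto simp: Lam_eq tr_def)
  moreover have r0: "restr {} = (\<lambda>\<eta> x. False)" by (simp add: restr_def fun_eq_iff)
  ultimately show ?thesis by (simp add: o_def)
qed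

lemma mem_tr: "x \<in> tr v ` A \<longleftrightarrow> (fst x - fst v, snd x - snd v) \<in> A"
proof
  assume "(fst x - fst v, snd x - snd v) \<in> A"
  then show "x \<in> tr v ` A" by (auto simp: tr_def image_iff intro!: bexI[of _ "(fst x - fst v, snd x - snd v)"])
qed (auto simp: tr_def)

lemma LTI_mu: "LTI Lam mu"
  unfolding LTI_def
proof (intro allI impI)
  fix A A' v assume A: "A \<subseteq> Lam" and A': "A' \<subseteq> Lam" and eq: "A' = translate_set v A"
  define B where "B = Lam \<inter> tr v ` Lam"
  have sub: "A' \<subseteq> B" using A A' eq by (auto simp: B_def translate_set_def)
  have r1: "\<And>x. restr A' (restr B x) = restr A' x" using sub by (auto simp: restr_def fun_eq_iff)
  have r2: "\<And>x. restr A' (shift v x) = shift v (restr A x)"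
    using eq by (auto simp: restr_def shift_def fun_eq_iff translate_set_def mem_tr)
  have "marginal A' mu = map_pmf (restr A') (map_pmf (restr B) mu)"
    by (simp add: marginal_def map_pmf_comp r1)
  also have "\<dots> = map_pmf (restr A') (map_pmf (restr B \<circ> shift v) mu)"
    using K B_def by simp
  also have "\<dots> = map_pmf (restr A' \<circ> shift v) mu"
    by (simp add: map_pmf_comp r1 o_def)
  also have "\<dots> = map_pmf (shift v) (marginal A mu)"
    by (simp add: r2 marginal_def map_pmf_comp o_def)
  finally show "marginal A' mu = map_pmf (shift v) (marginal A mu)" .
qed

definition good :: "int \<Rightarrow> int \<Rightarrow> config \<Rightarrow> bool" where
  "good a b \<eta> \<longleftrightarrow>
    (\<eta>(a,b) \<and> \<not>\<eta>(a,b+1) \<and> \<not>\<eta>(a+1,b) \<and> \<not>\<eta>(a+1,b+1)) \<or>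
    (\<eta>(a,b) \<and> \<eta>(a,b+1) \<and> \<eta>(a+1,b) \<and> \<not>\<eta>(a+1,b+1)) \<or>
    (\<not>\<eta>(a,b) \<and> \<eta>(a,b+1) \<and> \<not>\<eta>(a+1,b) \<and> \<eta>(a+1,b+1)) \<or>
    (\<not>\<eta>(a,b) \<and> \<not>\<eta>(a,b+1) \<and> \<eta>(a+1,b) \<and> \<eta>(a+1,b+1))"

lemma no_good: "\<not> (good a b \<eta> \<and> good (a+1) b \<eta> \<and> good a (b+1) \<eta> \<and> good (a+1) (b+1) \<eta>)"
proof -
  have "\<not> ((p00 \<and> \<not>p01 \<and> \<not>p10 \<and> \<not>p11) \<or> (p00 \<and> p01 \<and> p10 \<and> \<not>p11) \<or> (\<not>p00 \<and> p01 \<and> \<not>p10 \<and> p11) \<or> (\<not>p00 \<and> \<not>p01 \<and> p10 \<and> p11)) \<or>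
   \<not> ((p10 \<and> \<not>p11 \<and> \<not>p20 \<and> \<not>p21) \<or> (p10 \<and> p11 \<and> p20 \<and> \<not>p21) \<or> (\<not>p10 \<and> p11 \<and> \<not>p20 \<and> p21) \<or> (\<not>p10 \<and> \<not>p11 \<and> p20 \<and> p21)) \<or>
   \<not> ((p01 \<and> \<not>p02 \<and> \<not>p11 \<and> \<not>p12) \<or> (p01 \<and> p02 \<and> p11 \<and> \<not>p12) \<or> (\<not>p01 \<and> p02 \<and> \<not>p11 \<and> p12) \<or> (\<not>p01 \<and> \<not>p02 \<and> p11 \<and> p12)) \<or>
   \<not> ((p11 \<and> \<not>p12 \<and> \<not>p21 \<and> \<not>p22) \<or> (p11 \<and> p12 \<and> p21 \<and> \<not>p22) \<or> (\<not>p11 \<and> p12 \<and> \<not>p21 \<and> p22) \<or> (\<not>p11 \<and> \<not>p12 \<and> p21 \<and> p22))"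
    for p00 p01 p02 p10 p11 p12 p20 p21 p22 by (cases p00; cases p01; cases p10; cases p11; auto)
  from this[of "\<eta>(a,b)" "\<eta>(a,b+1)" "\<eta>(a,b+1+1)" "\<eta>(a+1,b)" "\<eta>(a+1,b+1)" "\<eta>(a+1,b+1+1)" "\<eta>(a+1+1,b)" "\<eta>(a+1+1,b+1)" "\<eta>(a+1+1,b+1+1)"]
  show ?thesis unfolding good_def by blast
qed

lemma ev_pt: "restr (square a b 2) \<eta> = shift (a,b) (conf S) \<Longrightarrow> x \<in> {0,1} \<Longrightarrow> y \<in> {0,1} \<Longrightarrow> \<eta> (a+x,b+y) = ((x,y) \<in> S)"
proof -
  assume e: "restr (square a b 2) \<eta> = shift (a,b) (conf S)" and xy: "x \<in> {0,1}" "y \<in> {0,1}"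
  have "restr (square a b 2) \<eta> (a+x,b+y) = shift (a,b) (conf S) (a+x,b+y)" using e by (rule fun_cong)
  moreover have "(a+x,b+y) \<in> square a b 2" using xy by (auto simp: square_def)
  ultimately show ?thesis by (simp add: restr_def shift_def conf_def)
qed

lemma good_of_restr:
  assumes e: "restr (square a b 2) \<eta> = shift (a,b) (conf S)"
    and S: "S \<in> {{(0,0)}, {(0,0),(0,1),(1,0)}, {(0,1),(1,1)}, {(1,0),(1,1)}}"
  shows "good a b \<eta>"
proof -
  have h1: "\<eta>(a,b) = ((0,0)\<in>S)" using ev_pt[OF e, of 0 0] by simp
  have h2: "\<eta>(a,b+1) = ((0,1)\<in>S)" using ev_pt[OF e, of 0 1] by simp
  have h3: "\<eta>(a+1,b) = ((1,0)\<in>S)" using ev_pt[OF e, of 1 0] by simp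
  have h4: "\<eta>(a+1,b+1) = ((1,1)\<in>S)" using ev_pt[OF e, of 1 1] by simp
  have all: "\<forall>S \<in> {{(0,0)}, {(0,0),(0,1),(1,0)}, {(0,1),(1,1)}, {(1,0),(1,1)}}.
     (\<eta>(a,b) = ((0,0)\<in>S) \<and> \<eta>(a,b+1) = ((0,1)\<in>S) \<and> \<eta>(a+1,b) = ((1,0)\<in>S) \<and> \<eta>(a+1,b+1) = ((1::int,1::int)\<in>S))
      \<longrightarrow> good a b \<eta>"
    unfolding good_def by simp
  have "(\<eta>(a,b) = ((0,0)\<in>S) \<and> \<eta>(a,b+1) = ((0,1)\<in>S) \<and> \<eta>(a+1,b) = ((1,0)\<in>S) \<and> \<eta>(a+1,b+1) = ((1::int,1::int)\<in>S))
      \<longrightarrow> good a b \<eta>" by (rule bspec[OF all S])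
  then show ?thesis using h1 h2 h3 h4 by (rule mp[OF _ conjI[OF _ conjI[OF _ conjI]]])
qed

lemma set_mu: "set_pmf mu = conf ` {{(0,0)}, {(0,0),(0,1),(1,0)}, {(0,1),(1,1)}, {(1,0),(1,1)}}"
  unfolding mu_def by (subst set_pmf_of_set) auto

lemma part3: "\<not> (\<exists>\<nu>. supported_on (square a b 3) \<nu> \<and>
                (\<forall>i\<in>{0,1}. \<forall>j\<in>{0,1}.
                   marginal (square (a + i) (b + j) 2) \<nu> = map_pmf (shift (a + i, b + j)) mu))"
proof
  assume "\<exists>\<nu>. supported_on (square a b 3) \<nu> \<and>
                (\<forall>i\<in>{0,1}. \<forall>j\<in>{0,1}.
                   marginal (square (a + i) (b + j) 2) \<nu> = map_pmf (shift (a + i, b + j)) mu)"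
  then obtain \<nu> where m: "\<And>i j. i\<in>{0,1} \<Longrightarrow> j\<in>{0,1} \<Longrightarrow>
                   marginal (square (a + i) (b + j) 2) \<nu> = map_pmf (shift (a + i, b + j)) mu" by blast
  obtain \<eta> where \<eta>: "\<eta> \<in> set_pmf \<nu>" using set_pmf_not_empty[of \<nu>] by blast
  have g: "good (a+i) (b+j) \<eta>" if "i\<in>{0,1}" "j\<in>{0,1}" for i j
  proof -
    have "restr (square (a + i) (b + j) 2) \<eta> \<in> set_pmf (marginal (square (a + i) (b + j) 2) \<nu>)"
      using \<eta> by (simp add: marginal_def)
    then have "restr (square (a + i) (b + j) 2) \<eta> \<in> shift (a + i, b + j) ` set_pmf mu"
      using m[OF that] by simp
    then obtain S where "S \<in> {{(0,0)}, {(0,0),(0,1),(1,0)}, {(0,1),(1,1)}, {(1,0),(1,1)}}"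
       "restr (square (a + i) (b + j) 2) \<eta> = shift (a + i, b + j) (conf S)"
      unfolding set_mu by blast
    then show ?thesis using good_of_restr by blast
  qed
  from g[of 0 0] g[of 1 0] g[of 0 1] g[of 1 1] no_good[of a b \<eta>] show False by simp
qed

lemma good_shift: "good a b (shift v \<eta>) = good (a - fst v) (b - snd v) \<eta>"
  by (simp add: good_def shift_def algebra_simps)

lemma part4: "\<not> (\<exists>M. TI_extension Lam mu M)"
proof
  assume "\<exists>M. TI_extension Lam mu M"
  then obtain M where P: "prob_space M" and S: "sets M = sets (cfg_space UNIV)"
    and I: "\<And>v. distr M M (shift v) = M"
    and D: "distr M (cfg_space Lam) (\<lambda>\<omega>. restrict \<omega> Lam) =
       distr (measure_pmf mu) (cfg_space Lam) (\<lambda>\<eta>. restrict \<eta> Lam)"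
    unfolding TI_extension_def by blast
  interpret prob_space M by (rule P)
  have pg: "Measurable.pred (cfg_space Lam) (good 0 0)"
  proof -
    have c: "Measurable.pred (cfg_space Lam) (\<lambda>f. f p)" if "p \<in> Lam" for p
      unfolding cfg_space_def using measurable_component_singleton[OF that, of "\<lambda>_. count_space (UNIV::bool set)"] by simp
    have "Measurable.pred (cfg_space Lam) (\<lambda>f. f (0,0))" "Measurable.pred (cfg_space Lam) (\<lambda>f. f (0,1))"
         "Measurable.pred (cfg_space Lam) (\<lambda>f. f (1,0))" "Measurable.pred (cfg_space Lam) (\<lambda>f. f (1,1))"
      by (rule c, simp add: Lam_eq)+
    note [measurable] = this
    show ?thesis unfolding good_def by simp measurable
  qed
  have mr: "(\<lambda>\<omega>. restrict \<omega> Lam) \<in> measurable M (cfg_space Lam)"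
    using measurable_cong_sets[OF S refl] unfolding cfg_space_def
    by (metis cfg_space_def measurable_restrict_subset subset_UNIV)
  have ms: "shift v \<in> measurable M M" for v
  proof -
    have "shift v \<in> measurable (cfg_space UNIV) (cfg_space UNIV)"
      unfolding cfg_space_def shift_def
      by (rule measurable_PiM_single') (auto intro!: measurable_component_singleton)
    then show ?thesis using measurable_cong_sets[OF S S] by simp
  qed
  have "AE \<eta> in measure_pmf mu. good 0 0 (restrict \<eta> Lam)"
    by (rule AE_pmfI) (unfold set_mu, elim imageE insertE emptyE, simp_all add: good_def Lam_eq conf_def)
  then have "AE \<omega> in distr (measure_pmf mu) (cfg_space Lam) (\<lambda>\<eta>. restrict \<eta> Lam). good 0 0 \<omega>"
  proof (subst AE_distr_iff)
    show "(\<lambda>\<eta>. restrict \<eta> Lam) \<in> measure_pmf mu \<rightarrow>\<^sub>M cfg_space Lam"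
      by (simp add: cfg_space_def space_PiM)
    show "{x \<in> space (cfg_space Lam). good 0 0 x} \<in> sets (cfg_space Lam)"
      using pg by (simp add: Measurable.pred_def)
  qed
  then have "AE \<omega> in distr M (cfg_space Lam) (\<lambda>\<omega>. restrict \<omega> Lam). good 0 0 \<omega>"
    unfolding D .
  then have "AE \<omega> in M. good 0 0 (restrict \<omega> Lam)"
    by (rule AE_distrD[OF mr])
  then have g0: "AE \<omega> in M. good 0 0 \<omega>"
    by (rule AE_mp) (rule AE_I2, simp add: good_def Lam_eq)
  have gv: "AE \<omega> in M. good (- fst v) (- snd v) \<omega>" for v
  proof -
    have "AE \<omega> in distr M M (shift v). good 0 0 \<omega>" unfolding I[of v] by (rule g0)
    then have "AE \<omega> in M. good 0 0 (shift v \<omega>)" by (rule AE_distrD[OF ms])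
    then show ?thesis by (simp add: good_shift)
  qed
  have g1: "AE \<omega> in M. good 1 0 \<omega>" using gv[of "(-1,0)"] by simp
  have g2: "AE \<omega> in M. good 0 1 \<omega>" using gv[of "(0,-1)"] by simp
  have g3: "AE \<omega> in M. good 1 1 \<omega>" using gv[of "(-1,-1)"] by simp
  have "AE \<omega> in M. good 0 0 \<omega> \<and> good (0+1) 0 \<omega> \<and> good 0 (0+1) \<omega> \<and> good (0+1) (0+1) \<omega>"
    using g0 g1 g2 g3 by (simp add: AE_conj_iff)
  then have "AE \<omega> in M. False"
    by (rule AE_mp) (rule AE_I2, use no_good in blast)
  then show False by simp
qed

theorem mainTheorem13:
  shows "supported_on Lam mu \<and> LTI Lam mu
    \<and> (\<forall>a b. Lam \<subseteq> square a b 3 \<longrightarrow>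
          \<not> (\<exists>\<nu>. supported_on (square a b 3) \<nu> \<and>
                (\<forall>i\<in>{0,1}. \<forall>j\<in>{0,1}.
                   marginal (square (a + i) (b + j) 2) \<nu> = map_pmf (shift (a + i, b + j)) mu)))
    \<and> \<not> (\<exists>M. TI_extension Lam mu M)"
proof (intro conjI allI impI)
  show "supported_on Lam mu"
    unfolding supported_on_def set_mu by (auto simp: conf_def Lam_eq)
  show "LTI Lam mu" by (rule LTI_mu)
  show "\<not> (\<exists>M. TI_extension Lam mu M)" by (rule part4)
  fix a b show "\<not> (\<exists>\<nu>. supported_on (square a b 3) \<nu> \<and>
                (\<forall>i\<in>{0,1}. \<forall>j\<in>{0,1}.
                   marginal (square (a + i) (b + j) 2) \<nu> = map_pmf (shift (a + i, b + j)) mu))"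
    by (rule part3)
qed

end
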